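(* Under the standing assumptions described in the context (including (H4)–(H8)), for every $k=0,\dots,N$: $$|\sigma^*_{k+1}|\le H^2h^2,\qquad |\sigma_{k+1}|\le \tfrac12 H^2h^2,\qquad |\tau_{k+1}|\le \tfrac12H^2h^2+\tfrac12K_2H^3h^3.$$
   Context: Let $T>0$ and let $g:[0,T]\to[0,\infty)$ be increasing, left-continuous, continuous at $0$, with a finite set $D_g\subset(0,T)$ of discontinuity points; $\Delta^+\varphi(t)=\varphi(t^+)-\varphi(t)$; $g^B(t)=\sum_{s\in[0,t)}\Delta^+g(s)$, $g^C=g-g^B$; $\mu_g$ is the Lebesgue–Stieltjes measure with $\mu_g([c,d))=g(d)-g(c)$. For $u:[0,T]\to\mathbb R$ the Stieltjes derivative at $t$ is $u'_g(t)=\lim_{s\to t}\frac{u(s)-u(t)}{g(s)-g(t)}$ if $t\notin D_g$ and $u'_g(t)=\frac{u(t^+)-u(t)}{\Delta^+g(t)}$ if $t\in D_g$. Let $f:[0,T]\times\mathbb R\to\mathbb R$, $x_0\in\mathbb R$, and let $x$ be the solution of $x'_g(t)=f(t,x(t))$ for $\mu_g$-a.e. $t\in[0,T)$, $x(0)=x_0$; it satisfies $x(t)=x_0+\int_{[0,t)}f(s,x(s))\,\mathrm d\mu_g(s)$ for all $t\in[0,T]$. Put $f_*(x)(t)=f(t,x(t))$, $f_*^B(x)(t)=\sum_{s\in[0,t)}\Delta^+f_*(x)(s)$, $f_*^C(x)=f_*(x)-f_*^B(x)$. A function $u$ is $g$-Lipschitz with constant $H$ if $|u(t)-u(s)|\le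 H|g(t)-g(s)|$ for all $t,s$; $g$-continuous means: for every $t_0$ and $\epsilon>0$ there is $\delta>0$ with $|g(t)-g(t_0)|<\delta\Rightarrow|u(t)-u(t_0)|<\epsilon$. Hypotheses: (H4) $0=t_0<t_1<\dots<t_{N+1}=T$ with $t_{k+1}-t_k=h>0$ for all $k$, and $D_g\subset\{t_k\}$; $K_1=\max\{\Delta^+g(d):d\in D_g\}$. (H5) $f_*(x)$ is $g$-Lipschitz with constant $H>0$, and $f_*^C(x)$ and $g^C$ are Lipschitz with constant $H$. (H6) for every $c\in\mathbb R$, $f(\cdot,c)$ is bounded and $g$-continuous on $[0,T]$. (H7) for every $t$, $f(t,\cdot)\in C^1(\mathbb R)$ and $|\partial_x f(t,x)|<K_2$ for all $(t,x)$. (H8) for every $t\in[0,T)$ and $c$, the right limit $f(t^+,c)=\lim_{s\to t^+}f(s,c)$ exists, $f(t^+,\cdot)\in C^1(\mathbb R)$ and $|\partial_x f(t^+,x)|<K_3$ for all $(t,x)$. Notation: $x_k=x(t_k)$, $x_k^+=x(t_k^+)$. Local errors, $k=0,\dots,N$: $\sigma^*_{k+1}=x_{k+1}-x_k^+-f(t_k^+,x_k^+)(g(t_{k+1})-g(t_k^+))$; $\sigma_{k+1}=x_{k+1}-x_k^+-\tfrac12(f(t_k^+,x_k^+)+f(t_{k+1},x_{k+1}))(g(t_{k+1})-g(t_k^+))$; $x^*_{k+1}=x_{k+1}-\sigma^*_{k+1}$; $\tau_{k+1}=x_{k+1}-x_k^+-\tfrac12(f(t_k^+,x_k^+)+f(t_{k+1},x^*_{k+1}))(g(t_{k+1})-g(t_k^+))$.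 *)

theory Defs
  imports "HOL-Analysis.Analysis"
begin

definition rlim :: "(real \<Rightarrow> real) \<Rightarrow> real \<Rightarrow> real" where
  "rlim \<phi> t = Lim (at_right t) \<phi>"

definition rjump :: "(real \<Rightarrow> real) \<Rightarrow> real \<Rightarrow> real" where
  "rjump \<phi> t = rlim \<phi> t - \<phi> t"

text \<open>Jump part phi^B(t) = sum of right jumps over s in [0,t) (only the nonzero ones,
  which form a finite set under the standing hypotheses), and continuous part phi^C.\<close>
definition jump_part :: "(real \<Rightarrow> real) \<Rightarrow> real \<Rightarrow> real" where
  "jump_part \<phi> t = (\<Sum>s\<in>{s\<in>{0..<t}. rjump \<phi> s \<noteq> 0}. rjump \<phi> s)"

definition cont_part :: "(real \<Rightarrow> real) \<Rightarrow> real \<Rightarrow> real" where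
  "cont_part \<phi> t = \<phi> t - jump_part \<phi> t"

definition Dg :: "real \<Rightarrow> (real \<Rightarrow> real) \<Rightarrow> real set" where
  "Dg T g = {t\<in>{0<..<T}. \<not> isCont g t}"

text \<open>Lebesgue--Stieltjes measure of g on [0,T] with mu([c,d)) = g(d) - g(c).
  g is extended constantly outside [0,T]; the left-continuous nondecreasing extension G
  is turned into the right-continuous function t -> -G(-t), whose interval measure
  (mu((a,b]) = F b - F a) is reflected back by t -> -t.\<close>
definition g_ext :: "real \<Rightarrow> (real \<Rightarrow> real) \<Rightarrow> real \<Rightarrow> real" where
  "g_ext T g t = g (max 0 (min T t))"

definition LS_measure :: "real \<Rightarrow> (real \<Rightarrow> real) \<Rightarrow> real measure" where
  "LS_measure T g = distr (interval_measure (\<lambda>t. - g_ext T g (- t))) borel uminus"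

definition g_lipschitz :: "real \<Rightarrow> (real \<Rightarrow> real) \<Rightarrow> real \<Rightarrow> (real \<Rightarrow> real) \<Rightarrow> bool" where
  "g_lipschitz T g H u \<longleftrightarrow> (\<forall>t\<in>{0..T}. \<forall>s\<in>{0..T}. \<bar>u t - u s\<bar> \<le> H * \<bar>g t - g s\<bar>)"

definition lipschitz_0T :: "real \<Rightarrow> real \<Rightarrow> (real \<Rightarrow> real) \<Rightarrow> bool" where
  "lipschitz_0T T H u \<longleftrightarrow> (\<forall>t\<in>{0..T}. \<forall>s\<in>{0..T}. \<bar>u t - u s\<bar> \<le> H * \<bar>t - s\<bar>)"

definition g_continuous :: "real \<Rightarrow> (real \<Rightarrow> real) \<Rightarrow> (real \<Rightarrow> real) \<Rightarrow> bool" where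
  "g_continuous T g u \<longleftrightarrow> (\<forall>t0\<in>{0..T}. \<forall>\<epsilon>>0. \<exists>\<delta>>0. \<forall>t\<in>{0..T}.
      \<bar>g t - g t0\<bar> < \<delta> \<longrightarrow> \<bar>u t - u t0\<bar> < \<epsilon>)"

end

theory Submission imports Defs begin

lemma mono_rlim_ex:
  fixes \<phi> :: "real \<Rightarrow> real"
  assumes ab: "a < b" and mono: "\<And>u v. a < u \<Longrightarrow> u \<le> v \<Longrightarrow> v \<le> b \<Longrightarrow> \<phi> u \<le> \<phi> v"
    and bnd: "\<And>u. a < u \<Longrightarrow> u \<le> b \<Longrightarrow> K \<le> \<phi> u"
  shows "\<exists>L. (\<phi> \<longlongrightarrow> L) (at_right a)"
proof -
  have "(\<phi> \<longlongrightarrow> Inf (\<phi> ` ({a<..} \<inter> {..b}))) (at a within ({a<..} \<inter> {..b}))"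
    by (rule Lim_right_bound[where K=K]) (auto intro: mono bnd)
  moreover have "eventually (\<lambda>x. x \<in> {a<..} \<inter> {..b} \<longleftrightarrow> x \<in> {a<..}) (at a)"
    unfolding eventually_at using ab
    by (intro exI[of _ "b - a"]) (auto simp: dist_real_def)
  ultimately show ?thesis using Lim_transform_within_set by blast
qed

lemma lip_deriv:
  fixes \<phi> \<phi>' :: "real \<Rightarrow> real"
  assumes d: "\<And>y. (\<phi> has_real_derivative \<phi>' y) (at y)" and b: "\<And>y. \<bar>\<phi>' y\<bar> \<le> K"
  shows "\<bar>\<phi> p - \<phi> q\<bar> \<le> K * \<bar>p - q\<bar>"
proof -
  have *: "\<bar>\<phi> v - \<phi> u\<bar> \<le> K * \<bar>v - u\<bar>" if uv: "u < v" for u v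
  proof -
    obtain z where "\<phi> v - \<phi> u = (v - u) * \<phi>' z" using MVT2[OF uv, of \<phi> \<phi>'] d by blast
    then have "\<bar>\<phi> v - \<phi> u\<bar> = \<bar>v - u\<bar> * \<bar>\<phi>' z\<bar>" by (simp add: abs_mult)
    also have "\<dots> \<le> \<bar>v - u\<bar> * K" using b by (intro mult_left_mono) auto
    finally show ?thesis by (simp add: mult.commute)
  qed
  consider "p < q" | "p = q" | "q < p" by linarith
  then show ?thesis
  proof cases
    case 1 then show ?thesis using *[OF 1] by (simp add: abs_minus_commute)
  next
    case 2 then show ?thesis by simp
  next
    case 3 then show ?thesis using *[OF 3] by simp
  qed
qed

lemma LS_emeasure:
  fixes g :: "real \<Rightarrow> real"
  assumes T: "T > 0" and g_mono: "mono_on {0..T} g"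
    and g_left_cont: "\<forall>t\<in>{0<..T}. (g \<longlongrightarrow> g t) (at_left t)"
    and st: "0 \<le> s" "s \<le> t" "t \<le> T"
  shows "emeasure (LS_measure T g) {s..<t} = ennreal (g t - g s)"
    and "sets (LS_measure T g) = sets borel"
proof -
  define G where "G = g_ext T g"
  define F where "F = (\<lambda>t. - G (- t))"
  have Gm: "G u \<le> G v" if "u \<le> v" for u v
    unfolding G_def g_ext_def using that T
    by (intro mono_onD[OF g_mono]) auto
  have Gl: "(G \<longlongrightarrow> G u) (at_left u)" for u
  proof -
    consider "u \<le> 0" | "T < u" | "0 < u" "u \<le> T" by linarith
    then show ?thesis
    proof cases
      case 1
      have "eventually (\<lambda>v. G v = G u) (at_left u)"
        unfolding eventually_at_left_real[of "u - 1" u, simplified]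
        by (rule eventually_at_leftI[of "u - 1"]) (use 1 in \<open>auto simp: G_def g_ext_def\<close>)
      then show ?thesis by (rule tendsto_eventually)
    next
      case 2
      have "eventually (\<lambda>v. G v = G u) (at_left u)"
        by (rule eventually_at_leftI[of T]) (use 2 T in \<open>auto simp: G_def g_ext_def\<close>)
      then show ?thesis by (rule tendsto_eventually)
    next
      case 3
      have "eventually (\<lambda>v. g v = G v) (at_left u)"
        by (rule eventually_at_leftI[of 0]) (use 3 in \<open>auto simp: G_def g_ext_def\<close>)
      moreover have "(g \<longlongrightarrow> G u) (at_left u)"
        using g_left_cont 3 by (auto simp: G_def g_ext_def)
      ultimately show ?thesis by (rule Lim_transform_eventually[rotated])
    qed
  qed
  have Fm: "F u \<le> F v" if "u \<le> v" for u v
    unfolding F_def using Gm[of "-v" "-u"] that by simp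
  have Fr: "continuous (at_right a) F" for a
  proof -
    have "((\<lambda>v. - G v) \<longlongrightarrow> - G (- a)) (at_left (- a))"
      by (intro tendsto_minus Gl)
    then have "(F \<longlongrightarrow> F a) (at_right a)"
      unfolding at_right_minus filterlim_filtermap F_def by (simp add: o_def)
    then show ?thesis by (simp add: continuous_within)
  qed
  have sM: "sets (interval_measure F) = sets borel" by (simp add: sets_interval_measure)
  have meas: "uminus \<in> measurable (interval_measure F) borel"
    using measurable_cong_sets[OF sM refl] by auto
  show "sets (LS_measure T g) = sets borel"
    unfolding LS_measure_def by simp
  have "emeasure (LS_measure T g) {s..<t} = emeasure (interval_measure F) (uminus -` {s..<t} \<inter> space (interval_measure F))"
    unfolding LS_measure_def F_def G_def by (rule emeasure_distr) (use meas in \<open>auto simp: F_def G_def\<close>)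
  also have "uminus -` {s..<t} \<inter> space (interval_measure F) = {-t<..-s}"
    by (auto simp: space_interval_measure)
  also have "emeasure (interval_measure F) {-t<..-s} = F (-s) - F (-t)"
    using st by (intro emeasure_interval_measure_Ioc Fm Fr) auto
  also have "F (-s) - F (-t) = g t - g s"
    using st by (simp add: F_def G_def g_ext_def)
  finally show "emeasure (LS_measure T g) {s..<t} = ennreal (g t - g s)" .
qed

lemma rjump_zero:
  assumes "(\<phi> \<longlongrightarrow> \<phi> s) (at_right s)"
  shows "rjump \<phi> s = 0"
  unfolding rjump_def rlim_def using tendsto_Lim[OF trivial_limit_at_right_real assms] by simp

lemma isCont_right: "isCont \<phi> (s::real) \<Longrightarrow> (\<phi> \<longlongrightarrow> \<phi> s) (at_right s)"
  by (metis continuous_at_split continuous_within)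

lemma jump_part_const:
  assumes z: "\<And>s. a < s \<Longrightarrow> s < b \<Longrightarrow> rjump \<phi> s = 0"
    and r: "a < r" "r \<le> b" and r': "a < r'" "r' \<le> b"
  shows "jump_part \<phi> r = jump_part \<phi> r'"
proof -
  have "{s\<in>{0..<r}. rjump \<phi> s \<noteq> 0} = {s\<in>{0..<r'}. rjump \<phi> s \<noteq> 0}"
  proof (intro set_eqI iffI)
    fix s assume s: "s \<in> {s\<in>{0..<r}. rjump \<phi> s \<noteq> 0}"
    then have "\<not> (a < s \<and> s < b)" using z by auto
    with s r r' show "s \<in> {s\<in>{0..<r'}. rjump \<phi> s \<noteq> 0}" by auto
  next
    fix s assume s: "s \<in> {s\<in>{0..<r'}. rjump \<phi> s \<noteq> 0}"
    then have "\<not> (a < s \<and> s < b)" using z by auto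
    with s r r' show "s \<in> {s\<in>{0..<r}. rjump \<phi> s \<noteq> 0}" by auto
  qed
  then show ?thesis unfolding jump_part_def by simp
qed

lemma cell_lip:
  assumes L: "lipschitz_0T T H (cont_part \<phi>)" and ab: "0 \<le> a" "b \<le> T"
    and z: "\<And>s. a < s \<Longrightarrow> s < b \<Longrightarrow> rjump \<phi> s = 0"
    and r: "a < r" "r \<le> b" and r': "a < r'" "r' \<le> b"
  shows "\<bar>\<phi> r - \<phi> r'\<bar> \<le> H * \<bar>r - r'\<bar>"
proof -
  have "jump_part \<phi> r = jump_part \<phi> r'" by (rule jump_part_const[OF z r r']) auto
  then have "\<phi> r - \<phi> r' = cont_part \<phi> r - cont_part \<phi> r'" unfolding cont_part_def by simp
  moreover have "\<bar>cont_part \<phi> r - cont_part \<phi> r'\<bar> \<le> H * \<bar>r - r'\<bar>"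
    using L ab r r' unfolding lipschitz_0T_def by auto
  ultimately show ?thesis by simp
qed

lemma set_int_bound:
  fixes \<phi> :: "real \<Rightarrow> real"
  assumes I: "set_integrable \<mu> A \<phi>" and A: "A \<in> sets \<mu>" and m: "emeasure \<mu> A = ennreal m" "m \<ge> 0"
    and bd: "\<forall>u\<in>A. \<bar>\<phi> u - c\<bar> \<le> K"
  shows "\<bar>(LINT u:A|\<mu>. \<phi> u) - c * m\<bar> \<le> K * m"
proof -
  have fin: "emeasure \<mu> A < \<infinity>" using m by simp
  have cI: "set_integrable \<mu> A (\<lambda>_. d)" for d :: real
    unfolding set_integrable_def
    by (rule integrableI_bounded_set_indicator[where B="\<bar>d\<bar>"]) (use A fin in auto)
  have meas: "measure \<mu> A = m" using m by (simp add: measure_def)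
  have cst: "(LINT u:A|\<mu>. d) = d * m" for d :: real
    using set_integral_const[of A \<mu> d] A fin meas by (simp add: mult.commute)
  have "(LINT u:A|\<mu>. \<phi> u) - c * m = (LINT u:A|\<mu>. \<phi> u - c)"
    using set_integral_diff(2)[OF I cI[of c]] cst[of c] by simp
  moreover have "(LINT u:A|\<mu>. \<phi> u - c) \<le> (LINT u:A|\<mu>. K)"
    by (rule set_integral_mono) (use I cI bd in \<open>auto simp: abs_le_iff\<close>)
  moreover have "(LINT u:A|\<mu>. -K) \<le> (LINT u:A|\<mu>. \<phi> u - c)"
    by (rule set_integral_mono) (use I cI bd in \<open>auto simp: abs_le_iff\<close>)
  ultimately show ?thesis using cst[of K] cst[of "-K"] by (simp add: abs_le_iff)
qed

lemma half_avg:
  fixes Fu c Fb A B C :: real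
  shows "\<lbrakk>\<bar>Fu - c\<bar> \<le> A; \<bar>Fu - Fb\<bar> \<le> B; A + B = C\<rbrakk> \<Longrightarrow> \<bar>Fu - (c + Fb) / 2\<bar> \<le> C / 2"
  by (simp add: abs_le_iff field_simps)

lemma cell_of:
  fixes h t :: real
  assumes "h > 0" "0 \<le> t"
  shows "\<exists>k::nat. real k * h \<le> t \<and> t < real (Suc k) * h"
proof -
  define k where "k = nat \<lfloor>t / h\<rfloor>"
  have k: "real k = of_int \<lfloor>t / h\<rfloor>" using assms unfolding k_def by simp
  have "real k \<le> t / h" "t / h < real k + 1" unfolding k by linarith+
  then have "real k * h \<le> t" "t < (real k + 1) * h"
    using assms by (simp_all add: le_divide_eq divide_less_eq)
  then show ?thesis by (intro exI[of _ k]) (simp add: algebra_simps)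
qed


theorem mainTheorem8:
  fixes T h H K2 K3 x0 :: real and N :: nat
    and g x :: "real \<Rightarrow> real"
    and f fx fp fpx :: "real \<Rightarrow> real \<Rightarrow> real"
  assumes T_pos: "T > 0"
    and g_mono: "mono_on {0..T} g"
    and g_nonneg: "\<forall>t\<in>{0..T}. g t \<ge> 0"
    and g_left_cont: "\<forall>t\<in>{0<..T}. (g \<longlongrightarrow> g t) (at_left t)"
    and g_cont_0: "(g \<longlongrightarrow> g 0) (at_right 0)"
    and Dg_finite: "finite (Dg T g)"
    and H4_h: "h > 0"
    and H4_T: "T = real (Suc N) * h"
    and H4_D: "Dg T g \<subseteq> {real k * h | k. k \<le> Suc N}"
    and sol_init: "x 0 = x0"
    and sol_int: "\<forall>t\<in>{0..T}. x t = x0 + (LINT s:{0..<t}|LS_measure T g. f s (x s))"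
    and H5_pos: "H > 0"
    and H5_glip: "g_lipschitz T g H (\<lambda>t. f t (x t))"
    and H5_fC: "lipschitz_0T T H (cont_part (\<lambda>t. f t (x t)))"
    and H5_gC: "lipschitz_0T T H (cont_part g)"
    and H6_bdd: "\<forall>c. \<exists>B. \<forall>t\<in>{0..T}. \<bar>f t c\<bar> \<le> B"
    and H6_gcont: "\<forall>c. g_continuous T g (\<lambda>t. f t c)"
    and H7_deriv: "\<forall>t\<in>{0..T}. \<forall>y. (f t has_real_derivative fx t y) (at y)"
    and H7_C1: "\<forall>t\<in>{0..T}. continuous_on UNIV (fx t)"
    and H7_bd: "\<forall>t\<in>{0..T}. \<forall>y. \<bar>fx t y\<bar> < K2"
    and H8_lim: "\<forall>t\<in>{0..<T}. \<forall>c. ((\<lambda>s. f s c) \<longlongrightarrow> fp t c) (at_right t)"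
    and H8_deriv: "\<forall>t\<in>{0..<T}. \<forall>y. (fp t has_real_derivative fpx t y) (at y)"
    and H8_C1: "\<forall>t\<in>{0..<T}. continuous_on UNIV (fpx t)"
    and H8_bd: "\<forall>t\<in>{0..<T}. \<forall>y. \<bar>fpx t y\<bar> < K3"
  shows "\<forall>k\<le>N.
    (let tk = real k * h; tk1 = real (Suc k) * h;
         xk1 = x tk1; xkp = rlim x tk; dg = g tk1 - rlim g tk;
         \<sigma>s = xk1 - xkp - fp tk xkp * dg;
         \<sigma> = xk1 - xkp - (fp tk xkp + f tk1 xk1) / 2 * dg;
         xs = xk1 - \<sigma>s;
         \<tau> = xk1 - xkp - (fp tk xkp + f tk1 xs) / 2 * dg
     in \<bar>\<sigma>s\<bar> \<le> H\<^sup>2 * h\<^sup>2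
      \<and> \<bar>\<sigma>\<bar> \<le> H\<^sup>2 * h\<^sup>2 / 2
      \<and> \<bar>\<tau>\<bar> \<le> H\<^sup>2 * h\<^sup>2 / 2 + K2 * H^3 * h^3 / 2)"
proof -
  define F where "F = (\<lambda>t. f t (x t))"
  define \<mu> where "\<mu> = LS_measure T g"
  have sol: "\<forall>t\<in>{0..T}. x t = x0 + (LINT s:{0..<t}|\<mu>. F s)"
    using sol_int by (simp add: F_def \<mu>_def)
  have H5g: "\<And>t s. t \<in> {0..T} \<Longrightarrow> s \<in> {0..T} \<Longrightarrow> \<bar>F t - F s\<bar> \<le> H * \<bar>g t - g s\<bar>"
    using H5_glip unfolding g_lipschitz_def F_def by blast
  have H5f: "lipschitz_0T T H (cont_part F)" using H5_fC by (simp add: F_def)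
  have "\<bar>fx 0 0\<bar> < K2" using H7_bd T_pos by auto
  then have K2pos: "K2 > 0" by linarith
  have flip: "\<bar>f t p - f t q\<bar> \<le> K2 * \<bar>p - q\<bar>" if "t \<in> {0..T}" for t p q
    by (rule lip_deriv[of "f t" "fx t"]) (use H7_deriv H7_bd that in \<open>auto intro: less_imp_le\<close>)
  have gmono: "g u \<le> g v" if "0 \<le> u" "u \<le> v" "v \<le> T" for u v
    using g_mono that by (auto intro: mono_onD)
  have cellb: "0 \<le> real k * h \<and> real k * h < real (Suc k) * h \<and> real (Suc k) * h \<le> T
      \<and> real (Suc k) * h - real k * h = h" if "k \<le> N" for k
    using that H4_h by (auto simp: H4_T algebra_simps intro!: mult_right_mono)
  have grid: "isCont g s" if k: "k \<le> N" "real k * h < s" "s < real (Suc k) * h" for k s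
  proof (rule ccontr)
    assume nc: "\<not> isCont g s"
    have "0 < s" "s < T" using cellb[OF k(1)] k by linarith+
    then have "s \<in> Dg T g" using nc by (simp add: Dg_def)
    then obtain k' where k': "s = real k' * h" "k' \<le> Suc N" using H4_D by blast
    have "real k < real k'" using k k' H4_h by (simp add: mult_less_cancel_right)
    moreover have "real k' < real (Suc k)" using k k' H4_h by (simp only: mult_less_cancel_right)
    ultimately have "k < k'" "k' < Suc k" by (simp_all only: of_nat_less_iff)
    then show False by arith
  qed
  have rjg: "rjump g s = 0" if "k \<le> N" "real k * h < s" "s < real (Suc k) * h" for k s
    by (rule rjump_zero, rule isCont_right, rule grid[OF that])
  have rjF: "rjump F s = 0" if k: "k \<le> N" "real k * h < s" "s < real (Suc k) * h" for k s
  proof (rule rjump_zero)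
    have sT: "0 \<le> s" "s < T" using cellb[OF k(1)] k by linarith+
    have gr: "(g \<longlongrightarrow> g s) (at_right s)" by (rule isCont_right, rule grid[OF k])
    have "((\<lambda>r. F r - F s) \<longlongrightarrow> 0) (at_right s)"
    proof (rule Lim_null_comparison)
      show "eventually (\<lambda>r. norm (F r - F s) \<le> H * \<bar>g r - g s\<bar>) (at_right s)"
        using eventually_at_right_real[OF sT(2)]
        by eventually_elim (use sT H5g in auto)
      show "((\<lambda>r. H * \<bar>g r - g s\<bar>) \<longlongrightarrow> 0) (at_right s)"
        using tendsto_mult[OF tendsto_const[of H] tendsto_rabs[OF LIM_zero[OF gr]]] by simp
    qed
    then show "(F \<longlongrightarrow> F s) (at_right s)" by (rule LIM_zero_cancel)
  qed
  have cellg: "\<bar>g r - g r'\<bar> \<le> H * \<bar>r - r'\<bar>"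
    if k: "k \<le> N" "real k * h < r" "r \<le> real (Suc k) * h" "real k * h < r'" "r' \<le> real (Suc k) * h" for k r r'
    by (rule cell_lip[OF H5_gC, of "real k * h" "real (Suc k) * h"]) (use cellb[OF k(1)] rjg[OF k(1)] k in auto)
  have cellF: "\<bar>F r - F r'\<bar> \<le> H * \<bar>r - r'\<bar>"
    if k: "k \<le> N" "real k * h < r" "r \<le> real (Suc k) * h" "real k * h < r'" "r' \<le> real (Suc k) * h" for k r r'
    by (rule cell_lip[OF H5f, of "real k * h" "real (Suc k) * h"]) (use cellb[OF k(1)] rjF[OF k(1)] k in auto)
  define B where "B = \<bar>F 0\<bar> + H * (g T - g 0)"
  have Fb: "\<bar>F t\<bar> \<le> B" if "t \<in> {0..T}" for t
  proof -
    have "\<bar>F t - F 0\<bar> \<le> H * \<bar>g t - g 0\<bar>" using H5g[of t 0] that T_pos by auto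
    moreover have "\<bar>g t - g 0\<bar> \<le> g T - g 0" using gmono[of 0 t] gmono[of t T] that by auto
    ultimately have "\<bar>F t - F 0\<bar> \<le> H * (g T - g 0)"
      using H5_pos by (meson mult_left_mono less_imp_le order_trans)
    then show ?thesis unfolding B_def by linarith
  qed
  define C where "C = (\<lambda>k. real k * h) ` {..Suc N}"
  have countC: "countable C" unfolding C_def by (intro countable_finite) simp
  define Fc where "Fc = (\<lambda>t. F (max 0 (min T t)))"
  have Fc_cont: "continuous_on (- C) Fc"
  proof (intro continuous_at_imp_continuous_on ballI)
    fix t assume tC: "t \<in> - C"
    have ev: "eventually (\<lambda>u. \<bar>Fc u - Fc t\<bar> \<le> H * \<bar>u - t\<bar>) (at t)"
    proof -
      consider "t < 0" | "T < t" | "0 \<le> t" "t \<le> T" by linarith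
      then show ?thesis
      proof cases
        case 1
        show ?thesis using eventually_at_in_open'[of "{..<0}" t] 1 H5_pos
          by (auto elim!: eventually_mono simp: Fc_def)
      next
        case 2
        show ?thesis using eventually_at_in_open'[of "{T<..}" t] 2 H5_pos
          by (auto elim!: eventually_mono simp: Fc_def)
      next
        case 3
        obtain k where k: "real k * h \<le> t" "t < real (Suc k) * h" using cell_of[OF H4_h 3(1)] by blast
        have "T \<in> C" unfolding C_def H4_T by (rule image_eqI[of _ _ "Suc N"]) simp_all
        then have "t \<noteq> T" using tC by auto
        then have "t < T" using 3 by simp
        then have "real k * h < real (Suc N) * h" using k H4_T by linarith
        then have kN: "k \<le> N" using H4_h by (simp add: mult_less_cancel_right)
        have "real k * h \<in> C" unfolding C_def using kN by (intro imageI) simp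
        then have "t \<noteq> real k * h" using tC by auto
        then have k1: "real k * h < t" using k by simp
        have cb: "0 \<le> real k * h" "real (Suc k) * h \<le> T" using cellb[OF kN] by auto
        have "eventually (\<lambda>u. u \<in> {real k * h<..<real (Suc k) * h}) (at t)"
          by (rule eventually_at_in_open') (use k1 k(2) in auto)
        then show ?thesis
        proof eventually_elim
          case (elim u)
          then have u: "real k * h < u" "u < real (Suc k) * h" by auto
          then have "Fc u = F u" "Fc t = F t" using cb k1 k(2) by (auto simp: Fc_def)
          then show ?case
            using cellF[OF kN u(1) _ k1] u k(2) by auto
        qed
      qed
    qed
    have "((\<lambda>u. Fc u - Fc t) \<longlongrightarrow> 0) (at t)"
    proof (rule Lim_null_comparison)
      show "eventually (\<lambda>u. norm (Fc u - Fc t) \<le> H * \<bar>u - t\<bar>) (at t)" using ev by simp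
      have "((\<lambda>u. H * \<bar>u - t\<bar>) \<longlongrightarrow> H * \<bar>t - t\<bar>) (at t)" by (intro tendsto_intros)
      then show "((\<lambda>u. H * \<bar>u - t\<bar>) \<longlongrightarrow> 0) (at t)" by simp
    qed
    then show "isCont Fc t" unfolding isCont_def by (rule LIM_zero_cancel)
  qed
  have Fcm: "Fc \<in> borel_measurable borel"
    by (rule borel_measurable_continuous_countable_exceptions[OF countC Fc_cont])
  have sets_mu: "sets \<mu> = sets borel"
    unfolding \<mu>_def using LS_emeasure(2)[OF T_pos g_mono g_left_cont, of 0 0] T_pos by simp
  have emu: "emeasure \<mu> {s..<t} = ennreal (g t - g s)" if "0 \<le> s" "s \<le> t" "t \<le> T" for s t
    unfolding \<mu>_def using LS_emeasure(1)[OF T_pos g_mono g_left_cont that] .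
  have sint: "set_integrable \<mu> {s..<t} F" if st: "0 \<le> s" "s \<le> t" "t \<le> T" for s t
    unfolding set_integrable_def
  proof (rule integrableI_bounded_set[where A="{s..<t}" and B=B])
    show "{s..<t} \<in> sets \<mu>" using sets_mu by simp
    have "(\<lambda>u. indicator {s..<t} u *\<^sub>R Fc u) \<in> borel_measurable borel"
      by (intro borel_measurable_scaleR borel_measurable_indicator Fcm) simp
    moreover have "(\<lambda>u. indicator {s..<t} u *\<^sub>R Fc u) = (\<lambda>u. indicator {s..<t} u *\<^sub>R F u)"
      using st by (auto simp: Fc_def indicator_def)
    ultimately have "(\<lambda>u. indicator {s..<t} u *\<^sub>R F u) \<in> borel_measurable borel" by simp
    then show "(\<lambda>u. indicator {s..<t} u *\<^sub>R F u) \<in> borel_measurable \<mu>"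
    proof -
      have "borel_measurable \<mu> = borel_measurable borel" by (rule measurable_cong_sets[OF sets_mu refl])
      with \<open>(\<lambda>u. indicator {s..<t} u *\<^sub>R F u) \<in> borel_measurable borel\<close> show ?thesis by metis
    qed
    show "emeasure \<mu> {s..<t} < \<infinity>" using emu[OF st] by simp
    show "AE u in \<mu>. u \<in> {s..<t} \<longrightarrow> norm (indicator {s..<t} u *\<^sub>R F u) \<le> B"
      using Fb st by (intro AE_I2) auto
    show "AE u in \<mu>. u \<notin> {s..<t} \<longrightarrow> indicator {s..<t} u *\<^sub>R F u = 0"
      by (intro AE_I2) auto
  qed
  have xdiff: "x t - x s = (LINT u:{s..<t}|\<mu>. F u)" if st: "0 \<le> s" "s \<le> t" "t \<le> T" for s t
  proof -
    have "{0..<t} = {0..<s} \<union> {s..<t}" using st by auto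
    then have "(LINT u:{0..<t}|\<mu>. F u) = (LINT u:{0..<s}|\<mu>. F u) + (LINT u:{s..<t}|\<mu>. F u)"
      using set_integral_Un[of "{0..<s}" "{s..<t}" \<mu> F] sint[of 0 s] sint[OF st] st by auto
    moreover have "x t = x0 + (LINT u:{0..<t}|\<mu>. F u)" "x s = x0 + (LINT u:{0..<s}|\<mu>. F u)"
      using sol st by auto
    ultimately show ?thesis by simp
  qed
  have ibound: "\<bar>x t - x s - c * (g t - g s)\<bar> \<le> M * (g t - g s)"
    if st: "0 \<le> s" "s \<le> t" "t \<le> T" and bd: "\<forall>u\<in>{s..<t}. \<bar>F u - c\<bar> \<le> M" for s t c M
    using set_int_bound[OF sint[OF st] _ emu[OF st] _ bd] sets_mu gmono[OF st] xdiff[OF st] by simp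
  have xmono: "x s + B * g s \<le> x t + B * g t" if st: "0 \<le> s" "s \<le> t" "t \<le> T" for s t
  proof -
    have "\<bar>x t - x s - 0 * (g t - g s)\<bar> \<le> B * (g t - g s)"
      by (rule ibound[OF st]) (use Fb st in auto)
    then show ?thesis by (simp add: algebra_simps abs_le_iff)
  qed
  show ?thesis
  proof (intro allI impI)
    fix k assume kN: "k \<le> N"
    define a where "a = real k * h"
    define b where "b = real (Suc k) * h"
    have ab: "0 \<le> a" "a < b" "b \<le> T" "b - a = h" using cellb[OF kN] by (auto simp: a_def b_def)
    obtain L1 where L1: "((\<lambda>u. x u + B * g u) \<longlongrightarrow> L1) (at_right a)"
      using mono_rlim_ex[OF ab(2), of "\<lambda>u. x u + B * g u" "x a + B * g a"] xmono ab by force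
    obtain Lg where Lg: "(g \<longlongrightarrow> Lg) (at_right a)"
      using mono_rlim_ex[OF ab(2), of g "g a"] gmono ab by force
    define xp where "xp = L1 - B * Lg"
    have "((\<lambda>u. (x u + B * g u) - B * g u) \<longlongrightarrow> L1 - B * Lg) (at_right a)"
      by (intro tendsto_intros L1 Lg)
    then have xlim: "(x \<longlongrightarrow> xp) (at_right a)" by (simp add: xp_def)
    have xkp: "rlim x a = xp" unfolding rlim_def by (rule tendsto_Lim[OF trivial_limit_at_right_real xlim])
    have gkp: "rlim g a = Lg" unfolding rlim_def by (rule tendsto_Lim[OF trivial_limit_at_right_real Lg])
    define c where "c = fp a xp"
    have evab: "eventually (\<lambda>r. r \<in> {a<..<b}) (at_right a)" by (rule eventually_at_right_real[OF ab(2)])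
    have Flim: "(F \<longlongrightarrow> c) (at_right a)"
    proof -
      have l1: "((\<lambda>r. f r xp) \<longlongrightarrow> c) (at_right a)" using H8_lim ab unfolding c_def by auto
      have "((\<lambda>r. F r - f r xp) \<longlongrightarrow> 0) (at_right a)"
      proof (rule Lim_null_comparison)
        show "eventually (\<lambda>r. norm (F r - f r xp) \<le> K2 * \<bar>x r - xp\<bar>) (at_right a)"
          using evab by eventually_elim (use ab flip in \<open>auto simp: F_def\<close>)
        show "((\<lambda>r. K2 * \<bar>x r - xp\<bar>) \<longlongrightarrow> 0) (at_right a)"
          using tendsto_mult[OF tendsto_const[of K2] tendsto_rabs[OF LIM_zero[OF xlim]]] by simp
      qed
      from tendsto_add[OF this l1] show ?thesis by simp
    qed
    have Fc_bd: "\<bar>F r - c\<bar> \<le> H * (r - a)" if r: "a < r" "r \<le> b" for r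
    proof (rule tendsto_le[OF trivial_limit_at_right_real])
      show "((\<lambda>r'. H * (r - r')) \<longlongrightarrow> H * (r - a)) (at_right a)" by (intro tendsto_intros)
      show "((\<lambda>r'. \<bar>F r - F r'\<bar>) \<longlongrightarrow> \<bar>F r - c\<bar>) (at_right a)" by (intro tendsto_intros Flim)
      show "eventually (\<lambda>r'. \<bar>F r - F r'\<bar> \<le> H * (r - r')) (at_right a)"
        using eventually_at_right_real[OF r(1)]
      proof eventually_elim
        case (elim r')
        then show ?case using cellF[OF kN, of r r'] r by (auto simp: a_def b_def)
      qed
    qed
    have Fbb: "\<bar>F r - F b\<bar> \<le> H * (b - r)" if r: "a < r" "r \<le> b" for r
      using cellF[OF kN, of r b] r ab by (auto simp: a_def b_def)
    have gb: "0 \<le> g b - g s \<and> g b - g s \<le> H * h" if s: "a < s" "s \<le> b" for s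
    proof -
      have "\<bar>g b - g s\<bar> \<le> H * \<bar>b - s\<bar>" using cellg[OF kN, of b s] s ab by (auto simp: a_def b_def)
      moreover have "H * \<bar>b - s\<bar> \<le> H * h" using s ab H5_pos by (intro mult_left_mono) auto
      ultimately show ?thesis using gmono[of s b] s ab by auto
    qed
    have e1: "\<bar>x b - x s - c * (g b - g s)\<bar> \<le> H\<^sup>2 * h\<^sup>2" if s: "a < s" "s < b" for s
    proof -
      have "\<bar>x b - x s - c * (g b - g s)\<bar> \<le> (H * h) * (g b - g s)"
      proof (rule ibound)
        show "\<forall>u\<in>{s..<b}. \<bar>F u - c\<bar> \<le> H * h"
        proof
          fix u assume u: "u \<in> {s..<b}"
          have "\<bar>F u - c\<bar> \<le> H * (u - a)" using Fc_bd[of u] u s by auto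
          also have "\<dots> \<le> H * h" using u ab H5_pos by (intro mult_left_mono) auto
          finally show "\<bar>F u - c\<bar> \<le> H * h" .
        qed
      qed (use s ab in auto)
      also have "\<dots> \<le> (H * h) * (H * h)" using gb[of s] s H5_pos H4_h by (intro mult_left_mono) auto
      finally show ?thesis by (simp add: power2_eq_square algebra_simps)
    qed
    have e2: "\<bar>x b - x s - (c + F b) / 2 * (g b - g s)\<bar> \<le> H\<^sup>2 * h\<^sup>2 / 2" if s: "a < s" "s < b" for s
    proof -
      have "\<bar>x b - x s - (c + F b) / 2 * (g b - g s)\<bar> \<le> (H * h / 2) * (g b - g s)"
      proof (rule ibound)
        show "\<forall>u\<in>{s..<b}. \<bar>F u - (c + F b) / 2\<bar> \<le> H * h / 2"
        proof
          fix u assume u: "u \<in> {s..<b}"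
          have "\<bar>F u - c\<bar> \<le> H * (u - a)" using Fc_bd[of u] u s by auto
          moreover have "\<bar>F u - F b\<bar> \<le> H * (b - u)" using Fbb[of u] u s by auto
          moreover have "H * (u - a) + H * (b - u) = H * h" using ab by (simp add: algebra_simps)
          ultimately show "\<bar>F u - (c + F b) / 2\<bar> \<le> H * h / 2" by (rule half_avg)
        qed
      qed (use s ab in auto)
      also have "\<dots> \<le> (H * h / 2) * (H * h)" using gb[of s] s H5_pos H4_h by (intro mult_left_mono) auto
      finally show ?thesis by (simp add: power2_eq_square algebra_simps)
    qed
    define dg where "dg = g b - Lg"
    have glim: "((\<lambda>s. g b - g s) \<longlongrightarrow> dg) (at_right a)" unfolding dg_def by (intro tendsto_intros Lg)
    have dg0: "0 \<le> dg"
      by (rule tendsto_lowerbound[OF glim _ trivial_limit_at_right_real])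
         (use evab gb in \<open>auto elim!: eventually_mono\<close>)
    have dg1: "dg \<le> H * h"
      by (rule tendsto_upperbound[OF glim _ trivial_limit_at_right_real])
         (use evab gb in \<open>auto elim!: eventually_mono\<close>)
    define \<sigma>s where "\<sigma>s = x b - xp - c * dg"
    define \<sigma> where "\<sigma> = x b - xp - (c + F b) / 2 * dg"
    have s1: "\<bar>\<sigma>s\<bar> \<le> H\<^sup>2 * h\<^sup>2"
    proof (rule tendsto_upperbound[OF _ _ trivial_limit_at_right_real])
      show "((\<lambda>s. \<bar>x b - x s - c * (g b - g s)\<bar>) \<longlongrightarrow> \<bar>\<sigma>s\<bar>) (at_right a)"
        unfolding \<sigma>s_def by (intro tendsto_intros xlim glim)
      show "eventually (\<lambda>s. \<bar>x b - x s - c * (g b - g s)\<bar> \<le> H\<^sup>2 * h\<^sup>2) (at_right a)"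
        using evab by (auto elim!: eventually_mono intro: e1)
    qed
    have s2: "\<bar>\<sigma>\<bar> \<le> H\<^sup>2 * h\<^sup>2 / 2"
    proof (rule tendsto_upperbound[OF _ _ trivial_limit_at_right_real])
      show "((\<lambda>s. \<bar>x b - x s - (c + F b) / 2 * (g b - g s)\<bar>) \<longlongrightarrow> \<bar>\<sigma>\<bar>) (at_right a)"
        unfolding \<sigma>_def by (intro tendsto_intros xlim glim)
      show "eventually (\<lambda>s. \<bar>x b - x s - (c + F b) / 2 * (g b - g s)\<bar> \<le> H\<^sup>2 * h\<^sup>2 / 2) (at_right a)"
        using evab by eventually_elim (rule e2, auto)
    qed
    define xs where "xs = x b - \<sigma>s"
    define \<tau> where "\<tau> = x b - xp - (c + f b xs) / 2 * dg"
    have tau_eq: "\<tau> = \<sigma> + (F b - f b xs) / 2 * dg"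
      unfolding \<tau>_def \<sigma>_def by (simp add: F_def field_simps)
    have "\<bar>F b - f b xs\<bar> \<le> K2 * \<bar>x b - xs\<bar>" unfolding F_def using flip ab by auto
    also have "\<dots> = K2 * \<bar>\<sigma>s\<bar>" by (simp add: xs_def)
    also have "\<dots> \<le> K2 * (H\<^sup>2 * h\<^sup>2)" using s1 K2pos by (intro mult_left_mono) auto
    finally have fd: "\<bar>F b - f b xs\<bar> \<le> K2 * (H\<^sup>2 * h\<^sup>2)" .
    have "\<bar>(F b - f b xs) / 2 * dg\<bar> = \<bar>F b - f b xs\<bar> * dg / 2" using dg0 by (simp add: abs_mult)
    also have "\<dots> \<le> (K2 * (H\<^sup>2 * h\<^sup>2)) * (H * h) / 2"
      using fd dg0 dg1 K2pos by (intro divide_right_mono mult_mono) auto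
    also have "\<dots> = K2 * H ^ 3 * h ^ 3 / 2" by (simp add: power2_eq_square power3_eq_cube algebra_simps)
    finally have "\<bar>(F b - f b xs) / 2 * dg\<bar> \<le> K2 * H ^ 3 * h ^ 3 / 2" .
    then have s3: "\<bar>\<tau>\<bar> \<le> H\<^sup>2 * h\<^sup>2 / 2 + K2 * H ^ 3 * h ^ 3 / 2"
      using s2 tau_eq by linarith
    show "let tk = real k * h; tk1 = real (Suc k) * h;
         xk1 = x tk1; xkp = rlim x tk; dg = g tk1 - rlim g tk;
         \<sigma>s = xk1 - xkp - fp tk xkp * dg;
         \<sigma> = xk1 - xkp - (fp tk xkp + f tk1 xk1) / 2 * dg;
         xs = xk1 - \<sigma>s;
         \<tau> = xk1 - xkp - (fp tk xkp + f tk1 xs) / 2 * dg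
     in \<bar>\<sigma>s\<bar> \<le> H\<^sup>2 * h\<^sup>2
      \<and> \<bar>\<sigma>\<bar> \<le> H\<^sup>2 * h\<^sup>2 / 2
      \<and> \<bar>\<tau>\<bar> \<le> H\<^sup>2 * h\<^sup>2 / 2 + K2 * H^3 * h^3 / 2"
      unfolding Let_def a_def[symmetric] b_def[symmetric] xkp gkp dg_def[symmetric] c_def[symmetric]
      using s1 s2 s3 unfolding \<sigma>s_def \<sigma>_def \<tau>_def xs_def F_def by simp
  qed
qed

end
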